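(* For every initial state $x(0)\in\mathbb O^n$, the trajectory $x(t)$ of the PID opinion dynamics almost surely reaches an equilibrium in finite time.
   Context: Let $n\ge 1$, $\mathcal V=\{1,\dots,n\}$, and let $W=(w_{ij})$ be an $n\times n$ row-stochastic matrix (nonnegative entries, each row summing to $1$). The opinion set is a finite set of consecutive integers $\mathbb O=\{k,k+1,\dots,k+s\}$, and $\theta\in\mathbb O$ is a fixed "truth". For $x\in\mathbb O^n$, $i\in\mathcal V$, $z\in\mathbb O$, define $C^i_{\mathrm{social}}(z;x)=\sum_{j=1}^n w_{ij}|z-x_j|$ and $C^i_{\mathrm{cog}}(z)=|z-\theta|$, and the Pareto-improvement set $P_i(x)=\{z\in\mathbb O: C^i_{\mathrm{social}}(z;x)\le C^i_{\mathrm{social}}(x_i;x),\ |z-\theta|\le |x_i-\theta|\}$. PID opinion dynamics: starting from $x(0)$, at each time $t+1$ a node $i$ is chosen uniformly at random from $\mathcal V$ (independently over time) and sets $x_i(t+1)$ to an element chosen at random from $P_i(x(t))$, each element of $P_i(x(t))$ having positive probability; all other nodes keep their opinions. An equilibrium is a state $x^*$ with $P_i(x^* )=\{x^*_i\}$ for all $i\in\mathcal V$. *)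

theory Defs
  imports "HOL-Probability.Probability"
begin

type_synonym state = "nat \<Rightarrow> int"

definition opinions :: "int \<Rightarrow> nat \<Rightarrow> int set" where
  "opinions k s = {k..k + int s}"

definition states :: "nat \<Rightarrow> int set \<Rightarrow> state set" where
  "states n Op = {x. (\<forall>i\<in>{1..n}. x i \<in> Op) \<and> (\<forall>i. i \<notin> {1..n} \<longrightarrow> x i = 0)}"

definition row_stochastic :: "nat \<Rightarrow> (nat \<Rightarrow> nat \<Rightarrow> real) \<Rightarrow> bool" where
  "row_stochastic n W \<longleftrightarrow> (\<forall>i\<in>{1..n}. \<forall>j\<in>{1..n}. W i j \<ge> 0) \<and>
                          (\<forall>i\<in>{1..n}. (\<Sum>j\<in>{1..n}. W i j) = 1)"

definition C_social :: "nat \<Rightarrow> (nat \<Rightarrow> nat \<Rightarrow> real) \<Rightarrow> nat \<Rightarrow> int \<Rightarrow> state \<Rightarrow> real" where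
  "C_social n W i z x = (\<Sum>j\<in>{1..n}. W i j * \<bar>real_of_int (z - x j)\<bar>)"

definition C_cog :: "int \<Rightarrow> int \<Rightarrow> int" where
  "C_cog \<theta> z = \<bar>z - \<theta>\<bar>"

definition pareto_set :: "nat \<Rightarrow> (nat \<Rightarrow> nat \<Rightarrow> real) \<Rightarrow> int set \<Rightarrow> int \<Rightarrow> nat \<Rightarrow> state \<Rightarrow> int set" where
  "pareto_set n W Op \<theta> i x =
     {z \<in> Op. C_social n W i z x \<le> C_social n W i (x i) x \<and> C_cog \<theta> z \<le> C_cog \<theta> (x i)}"

definition equilibrium :: "nat \<Rightarrow> (nat \<Rightarrow> nat \<Rightarrow> real) \<Rightarrow> int set \<Rightarrow> int \<Rightarrow> state \<Rightarrow> bool" where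
  "equilibrium n W Op \<theta> x \<longleftrightarrow> (\<forall>i\<in>{1..n}. pareto_set n W Op \<theta> i x = {x i})"

text \<open>Randomness of one time step: a node i chosen uniformly from 1..n, together with,
independently, for every state y a new opinion g y drawn from K y i (K y i is the law of
the new opinion of node i in state y; its support is P_i(y)).  Steps are i.i.d. over time, which realises the PID Markov chain.\<close>
definition step_pmf :: "nat \<Rightarrow> int set \<Rightarrow> (state \<Rightarrow> nat \<Rightarrow> int pmf)
    \<Rightarrow> (nat \<times> (state \<Rightarrow> int)) pmf" where
  "step_pmf n Op K =
     bind_pmf (pmf_of_set {1..n})
       (\<lambda>i. map_pmf (\<lambda>g. (i, g)) (Pi_pmf (states n Op) 0 (\<lambda>y. K y i)))"

primrec traj :: "(nat \<times> (state \<Rightarrow> int)) stream \<Rightarrow> state \<Rightarrow> nat \<Rightarrow> state" where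
  "traj \<omega> x0 0 = x0"
| "traj \<omega> x0 (Suc t) =
     (let x = traj \<omega> x0 t; (i, g) = \<omega> !! t in x(i := g x))"

end

theory Submission imports Defs begin

definition stepf :: "state \<Rightarrow> nat \<times> (state \<Rightarrow> int) \<Rightarrow> state" where
  "stepf y a = y(fst a := snd a y)"

lemma traj_Suc': "traj \<omega> y (Suc t) = traj (stl \<omega>) (stepf y (shd \<omega>)) t"
  by (induction t arbitrary: y) (auto simp: stepf_def split: prod.splits)

lemma traj_Cons: "traj (a ## \<omega>) y (Suc t) = traj \<omega> (stepf y a) t"
  by (simp only: traj_Suc' stream.sel)

lemma meas_traj:
  "(\<lambda>\<omega>. traj \<omega> y t) \<in> measurable (stream_space (measure_pmf P)) (count_space UNIV)"
proof (induction t arbitrary: y)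
  case 0
  show ?case unfolding traj.simps(1) by (rule measurable_const) simp
next
  case (Suc t)
  have eq: "(\<lambda>\<omega>. traj \<omega> y (Suc t)) =
     (\<lambda>\<omega>. (\<lambda>iv \<omega>. traj (stl \<omega>) (y(fst iv := snd iv)) t) ((\<lambda>\<omega>. (fst (shd \<omega>), snd (shd \<omega>) y)) \<omega>) \<omega>)"
    by (simp del: traj.simps add: traj_Suc' stepf_def)
  show ?case unfolding eq
    apply (rule measurable_compose_countable'[where I=UNIV and f="\<lambda>iv \<omega>. traj (stl \<omega>) (y(fst iv := snd iv)) t" and g="\<lambda>\<omega>. (fst (shd \<omega>), snd (shd \<omega>) y)"])
    subgoal for iv by (rule measurable_compose[OF measurable_stl Suc.IH])
    subgoal by (rule measurable_compose[OF measurable_shd]) simp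
    by simp
qed

definition bad :: "(state \<Rightarrow> bool) \<Rightarrow> (nat \<times> (state \<Rightarrow> int)) stream \<Rightarrow> state \<Rightarrow> bool" where
  "bad E \<omega> y \<longleftrightarrow> (\<forall>t. \<not> E (traj \<omega> y t))"

lemma space_S: "space (stream_space (measure_pmf P)) = UNIV"
  by (simp add: space_stream_space)

lemma bad_sets: "{\<omega>. bad E \<omega> y} \<in> sets (stream_space (measure_pmf P))"
proof -
  have 1: "\<And>t. (\<lambda>\<omega>. traj \<omega> y t) -` {x. \<not> E x} \<inter> space (stream_space (measure_pmf P)) \<in> sets (stream_space (measure_pmf P))"
    by (rule measurable_sets[OF meas_traj]) simp
  have 2: "{\<omega>. bad E \<omega> y} = (\<Inter>t. (\<lambda>\<omega>. traj \<omega> y t) -` {x. \<not> E x} \<inter> space (stream_space (measure_pmf P)))"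
    unfolding space_S bad_def by blast
  show ?thesis unfolding 2
    by (rule sets.countable_INT') (use 1 in blast)+
qed

lemma bad_Cons:
  assumes "\<not> E y" shows "bad E (a ## \<omega>) y \<longleftrightarrow> bad E \<omega> (stepf y a)"
proof
  assume "bad E (a ## \<omega>) y"
  then show "bad E \<omega> (stepf y a)" unfolding bad_def
    by (metis traj_Cons)
next
  assume h: "bad E \<omega> (stepf y a)"
  show "bad E (a ## \<omega>) y" unfolding bad_def
  proof
    fix t show "\<not> E (traj (a ## \<omega>) y t)"
    proof (cases t)
      case 0 then show ?thesis using assms by simp
    next
      case (Suc u) then show ?thesis using h unfolding bad_def by (metis traj_Cons)
    qed
  qed
qed

lemma bad_rec:
  assumes "\<not> E y"
  shows "emeasure (stream_space (measure_pmf P)) {\<omega>. bad E \<omega> y} =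
     (\<integral>\<^sup>+a. emeasure (stream_space (measure_pmf P)) {\<omega>. bad E \<omega> (stepf y a)} \<partial>measure_pmf P)"
  apply (subst prob_space.emeasure_stream_space[OF measure_pmf.prob_space_axioms bad_sets])
  unfolding space_S using assms by (simp add: bad_Cons)

lemma states_finite: "finite (states n (opinions k s))"
proof -
  have "states n (opinions k s) = PiE_dflt {1..n} 0 (\<lambda>_. opinions k s)"
    by (auto simp: states_def PiE_dflt_def)
  then show ?thesis by (auto simp: opinions_def)
qed

lemma self_in_pareto:
  "y \<in> states n Op \<Longrightarrow> i \<in> {1..n} \<Longrightarrow> y i \<in> pareto_set n W Op \<theta> i y"
  by (simp add: pareto_set_def states_def)

lemma improve:
  assumes rs: "row_stochastic n W" and th: "\<theta> \<in> Op" and y: "y \<in> states n Op"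
    and ne: "\<not> equilibrium n W Op \<theta> y"
  shows "\<exists>i\<in>{1..n}. \<exists>z\<in>pareto_set n W Op \<theta> i y. \<bar>z - \<theta>\<bar> < \<bar>y i - \<theta>\<bar>"
proof -
  from ne obtain i where i: "i \<in> {1..n}" and pne: "pareto_set n W Op \<theta> i y \<noteq> {y i}"
    unfolding equilibrium_def by blast
  have yi: "y i \<in> pareto_set n W Op \<theta> i y" using self_in_pareto[OF y i] .
  obtain z where z: "z \<in> pareto_set n W Op \<theta> i y" and zne: "z \<noteq> y i"
    using pne yi by blast
  show ?thesis
  proof (cases "\<bar>z - \<theta>\<bar> < \<bar>y i - \<theta>\<bar>")
    case True then show ?thesis using z i by blast
  next
    case False
    have le: "\<bar>z - \<theta>\<bar> \<le> \<bar>y i - \<theta>\<bar>" using z by (simp add: pareto_set_def C_cog_def)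
    with False zne have sym: "z + y i = 2 * \<theta>" by linarith
    have yth: "y i \<noteq> \<theta>" using sym zne by linarith
    have soc: "C_social n W i z y \<le> C_social n W i (y i) y" using z by (simp add: pareto_set_def)
    have W0: "\<And>j. j \<in> {1..n} \<Longrightarrow> W i j \<ge> 0" using rs i by (simp add: row_stochastic_def)
    have t: "W i j * \<bar>real_of_int (\<theta> - y j)\<bar> \<le>
        (W i j * \<bar>real_of_int (z - y j)\<bar> + W i j * \<bar>real_of_int (y i - y j)\<bar>) / 2"
      if j: "j \<in> {1..n}" for j
    proof -
      have "2 * \<bar>\<theta> - y j\<bar> \<le> \<bar>z - y j\<bar> + \<bar>y i - y j\<bar>" using sym unfolding abs_if by auto
      then have "2 * \<bar>real_of_int (\<theta> - y j)\<bar> \<le> \<bar>real_of_int (z - y j)\<bar> + \<bar>real_of_int (y i - y j)\<bar>"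
        by (metis (mono_tags) of_int_abs of_int_add of_int_le_iff of_int_mult of_int_numeral)
      then have "W i j * (2 * \<bar>real_of_int (\<theta> - y j)\<bar>) \<le> W i j * (\<bar>real_of_int (z - y j)\<bar> + \<bar>real_of_int (y i - y j)\<bar>)"
        by (rule mult_left_mono) (use W0 j in auto)
      then show ?thesis by (simp add: algebra_simps)
    qed
    have "C_social n W i \<theta> y \<le> (\<Sum>j\<in>{1..n}. (W i j * \<bar>real_of_int (z - y j)\<bar> + W i j * \<bar>real_of_int (y i - y j)\<bar>) / 2)"
      unfolding C_social_def by (rule sum_mono) (rule t)
    also have "\<dots> = (C_social n W i z y + C_social n W i (y i) y) / 2"
      by (simp add: C_social_def sum_divide_distrib[symmetric] sum.distrib)
    also have "\<dots> \<le> C_social n W i (y i) y" using soc by simp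
    finally have "\<theta> \<in> pareto_set n W Op \<theta> i y"
      using th by (simp add: pareto_set_def C_cog_def)
    moreover have "\<bar>\<theta> - \<theta>\<bar> < \<bar>y i - \<theta>\<bar>" using yth by simp
    ultimately show ?thesis using i by blast
  qed
qed

lemma set_step:
  assumes "n \<ge> 1" "a \<in> set_pmf (step_pmf n Op K)" "finite (states n Op)"
  shows "fst a \<in> {1..n} \<and> (\<forall>y\<in>states n Op. snd a y \<in> set_pmf (K y (fst a)))"
proof -
  have ne: "{1..n} \<noteq> {}" using assms(1) by simp
  show ?thesis using assms(2,3) ne by (auto simp: step_pmf_def set_Pi_pmf PiE_dflt_def)
qed

lemma ex_step:
  assumes "n \<ge> 1" "finite (states n Op)" "i0 \<in> {1..n}" "y0 \<in> states n Op"
    "z0 \<in> set_pmf (K y0 i0)"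
  shows "\<exists>a\<in>set_pmf (step_pmf n Op K). fst a = i0 \<and> snd a y0 = z0"
proof -
  define g where "g = (\<lambda>y. if y \<in> states n Op then (if y = y0 then z0 else (SOME v. v \<in> set_pmf (K y i0))) else 0)"
  have "g \<in> PiE_dflt (states n Op) 0 (set_pmf \<circ> (\<lambda>y. K y i0))"
    unfolding PiE_dflt_def g_def using assms(5)
    by (auto intro: someI_ex simp: set_pmf_not_empty[unfolded ex_in_conv[symmetric]])
  then have "g \<in> set_pmf (Pi_pmf (states n Op) 0 (\<lambda>y. K y i0))"
    using assms(2) by (simp add: set_Pi_pmf)
  moreover have ne: "{1..n} \<noteq> {}" using assms(1) by simp
  ultimately have "(i0, g) \<in> set_pmf (step_pmf n Op K)"
    using assms(3) by (auto simp: step_pmf_def)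
  moreover have "g y0 = z0" using assms(4) by (simp add: g_def)
  ultimately show ?thesis by force
qed

theorem theorem2:
  fixes n :: nat and W :: "nat \<Rightarrow> nat \<Rightarrow> real" and k :: int and s :: nat and \<theta> :: int
    and K :: "state \<Rightarrow> nat \<Rightarrow> int pmf" and x0 :: state
  assumes "n \<ge> 1"
    and "row_stochastic n W"
    and "\<theta> \<in> opinions k s"
    and "\<And>x i. x \<in> states n (opinions k s) \<Longrightarrow> i \<in> {1..n} \<Longrightarrow>
           set_pmf (K x i) = pareto_set n W (opinions k s) \<theta> i x"
    and "x0 \<in> states n (opinions k s)"
  shows "AE \<omega> in stream_space (measure_pmf (step_pmf n (opinions k s) K)).
           \<exists>t. equilibrium n W (opinions k s) \<theta> (traj \<omega> x0 t)"
proof -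
  note n1 = assms(1) and rs = assms(2) and th = assms(3) and Kset = assms(4) and x0 = assms(5)
  define Op where "Op = opinions k s"
  define St where "St = states n Op"
  define P where "P = step_pmf n Op K"
  define S where "S = stream_space (measure_pmf P)"
  define E where "E = equilibrium n W Op \<theta>"
  define e where "e y = emeasure S {\<omega>. bad E \<omega> y}" for y
  define phi where "phi y = (\<Sum>j\<in>{1..n}. nat \<bar>y j - \<theta>\<bar>)" for y :: state
  have finSt: "finite St" unfolding St_def Op_def by (rule states_finite)
  have probS: "prob_space S" unfolding S_def
    by (rule prob_space.prob_space_stream_space[OF measure_pmf.prob_space_axioms])
  have e_le1: "e y \<le> 1" for y unfolding e_def by (rule prob_space.emeasure_le_1[OF probS])
  have e_eq: "E y \<Longrightarrow> e y = 0" for y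
  proof -
    assume "E y"
    then have "\<not> bad E \<omega> y" for \<omega> unfolding bad_def by (intro notI) (drule spec[of _ 0], simp)
    then have "{\<omega>. bad E \<omega> y} = {}" by blast
    then show ?thesis unfolding e_def by simp
  qed
  have e_rec: "\<not> E y \<Longrightarrow> e y = (\<integral>\<^sup>+a. e (stepf y a) \<partial>measure_pmf P)" for y
    unfolding e_def S_def by (rule bad_rec)
  have step_St: "stepf y a \<in> St" if "y \<in> St" "a \<in> set_pmf P" for y a
  proof -
    from set_step[OF n1 that(2)[unfolded P_def] finSt[unfolded St_def]] that(1)
    have i: "fst a \<in> {1..n}" and v: "snd a y \<in> set_pmf (K y (fst a))"
      unfolding St_def by auto
    have "snd a y \<in> Op" using v Kset[OF that(1)[unfolded St_def Op_def] i]
      by (simp add: pareto_set_def Op_def)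
    then show ?thesis using that(1) i unfolding St_def states_def stepf_def by auto
  qed
  have main: "\<forall>y\<in>St. e y = 0"
  proof (rule ccontr)
    assume "\<not> (\<forall>y\<in>St. e y = 0)"
    then obtain y1 where y1: "y1 \<in> St" "e y1 \<noteq> 0" by blast
    define m where "m = Max (e ` St)"
    have m_ge: "y \<in> St \<Longrightarrow> e y \<le> m" for y unfolding m_def using finSt by simp
    have "m \<in> e ` St" unfolding m_def using finSt y1(1) by (intro Max_in) auto
    then obtain y where "y \<in> St \<and> e y = m" by auto
    from ex_has_least_nat[of "\<lambda>y. y \<in> St \<and> e y = m", OF this]
    obtain y0 where y0: "y0 \<in> St" "e y0 = m" and least: "\<And>y. y \<in> St \<and> e y = m \<Longrightarrow> phi y0 \<le> phi y"
      by blast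
    have m0: "m \<noteq> 0" using m_ge[OF y1(1)] y1(2) by auto
    have nE: "\<not> E y0" using e_eq y0 m0 by auto
    from improve[OF rs th[folded Op_def] y0(1)[unfolded St_def] nE[unfolded E_def]]
    obtain i0 z0 where i0: "i0 \<in> {1..n}" and z0: "z0 \<in> pareto_set n W Op \<theta> i0 y0"
      and dec: "\<bar>z0 - \<theta>\<bar> < \<bar>y0 i0 - \<theta>\<bar>" by blast
    define y' where "y' = y0(i0 := z0)"
    have z0Op: "z0 \<in> Op" using z0 by (simp add: pareto_set_def)
    have y'St: "y' \<in> St" using y0(1) i0 z0Op unfolding St_def states_def y'_def by auto
    have "phi y' < phi y0" unfolding phi_def
    proof (rule sum_strict_mono_ex1)
      show "\<forall>x\<in>{1..n}. nat \<bar>y' x - \<theta>\<bar> \<le> nat \<bar>y0 x - \<theta>\<bar>"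
        using dec by (auto simp: y'_def)
      show "\<exists>a\<in>{1..n}. nat \<bar>y' a - \<theta>\<bar> < nat \<bar>y0 a - \<theta>\<bar>"
        using dec i0 by (auto simp: y'_def)
    qed simp
    then have "e y' \<noteq> m" using least[of y'] y'St by auto
    then have cm: "e y' < m" using m_ge[OF y'St] by auto
    define c where "c = e y'"
    define A where "A = {a. fst a = i0 \<and> snd a y0 = z0}"
    have zK: "z0 \<in> set_pmf (K y0 i0)" using Kset[OF y0(1)[unfolded St_def Op_def] i0] z0 by (simp add: Op_def)
    obtain a0 where a0: "a0 \<in> set_pmf P" "a0 \<in> A"
      using ex_step[where K=K, OF n1 finSt[unfolded St_def] i0 y0(1)[unfolded St_def] zK] unfolding A_def P_def
      by blast
    have PA: "emeasure (measure_pmf P) A > 0"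
      using measure_pmf_posI[OF a0] by (simp add: measure_pmf.emeasure_eq_measure)
    have hle: "AE a in measure_pmf P. e (stepf y0 a) + (m - c) * indicator A a \<le> m"
    proof (subst AE_measure_pmf_iff, intro ballI)
      fix a assume a: "a \<in> set_pmf P"
      show "e (stepf y0 a) + (m - c) * indicator A a \<le> m"
      proof (cases "a \<in> A")
        case True
        then have "stepf y0 a = y'" unfolding A_def y'_def stepf_def by auto
        then show ?thesis using True cm unfolding c_def by (simp add: add_diff_inverse_ennreal)
      next
        case False
        then show ?thesis using m_ge[OF step_St[OF y0(1) a]] by simp
      qed
    qed
    have "(\<integral>\<^sup>+a. e (stepf y0 a) + (m - c) * indicator A a \<partial>measure_pmf P) \<le> (\<integral>\<^sup>+a. m \<partial>measure_pmf P)"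
      by (rule nn_integral_mono_AE[OF hle])
    also have "\<dots> = m" by (simp add: measure_pmf.emeasure_space_1)
    finally have "(\<integral>\<^sup>+a. e (stepf y0 a) \<partial>measure_pmf P) + (m - c) * emeasure (measure_pmf P) A \<le> m"
      by (subst (asm) nn_integral_add) (auto simp: nn_integral_cmult_indicator)
    then have "m + (m - c) * emeasure (measure_pmf P) A \<le> m + 0"
      using e_rec[OF nE] y0(2) by simp
    moreover have "m \<noteq> \<infinity>" using e_le1[of y0] y0(2) by (auto simp: top_unique)
    ultimately have "(m - c) * emeasure (measure_pmf P) A \<le> 0"
      by (simp add: ennreal_add_left_cancel_le)
    moreover have "(m - c) * emeasure (measure_pmf P) A > 0"
      using PA diff_gr0_ennreal[OF cm[folded c_def]] by (simp add: ennreal_zero_less_mult_iff)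
    ultimately show False by auto
  qed
  have "e x0 = 0" using main x0 unfolding St_def Op_def by auto
  have "AE \<omega> in S. \<not> bad E \<omega> x0"
  proof (rule AE_I')
    show "{\<omega>. bad E \<omega> x0} \<in> null_sets S"
      using \<open>e x0 = 0\<close> bad_sets[of E x0 P] unfolding e_def S_def by (intro null_setsI) auto
  qed (auto simp: S_def space_S)
  then show ?thesis unfolding S_def P_def E_def Op_def bad_def by simp
qed

end
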